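(* Let $\mathcal L_0$ be a sufficiently large constant such that for every $\mathcal L\ge\mathcal L_0$ the number of primes in $[\sqrt{\mathcal L},\sqrt{2\mathcal L}]$ exceeds $\frac{\sqrt{\mathcal L}}{2\log\mathcal L}$. Then for any $\mathcal L\ge\mathcal L_0$, any $M,N>0$ and any real $t$, $$S^\flat(M,N,t)\ll\frac{\log\mathcal L}{\sqrt{\mathcal L}}\left(S(M\mathcal L,N,t)+S(2M\mathcal L,N,t)+\sum_{\substack{\sqrt{\mathcal L}\le p\le\sqrt{2\mathcal L}\\ p\text{ prime}}}\frac{S^\flat(M,N/p,t)}{p^2}\right),$$ where the implied constant is absolute (in particular independent of $\mathcal L$).
   Context: For a nonzero integer $m$, $\chi_m(n)=\left(\frac mn\right)$ denotes the Kronecker symbol. $G$ is a fixed smooth non-negative function supported in $[3/4,2]$ such that for every integer $J\ge0$, $G(x)+G(x/2)+\dots+G(x/2^J)$ equals $1$ on $[1,3\cdot2^{J-1}]$ and is supported on $[3/4,2^{J+1}]$. Define $$S(M,N,t)=\sum_{\substack{M\le|m|<2M\\ m\text{ not a perfect square}}}\left|\sum_{n\ge1}\frac{\chi_m(n)}{n^{\frac12+it}}G\!\left(\frac nN\right)\right|^4,\qquad S^\flat(M,N,t)=\sum_{\substack{M\le|m|<2M\\ m\text{ fundamental discriminant}}}\left|\sum_{n\ge1}\frac{\chi_m(n)}{n^{\frac12+it}}G\!\left(\frac nN\right)\right|^4.$$ *)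

theory Defs
  imports "HOL-Analysis.Analysis" "HOL-Number_Theory.Number_Theory" "HOL-Computational_Algebra.Squarefree"
begin

definition kron_prime :: "int \<Rightarrow> nat \<Rightarrow> int" where
  "kron_prime m p =
     (if p = 2 then (if even m then 0 else if m mod 8 = 1 \<or> m mod 8 = 7 then 1 else -1)
      else Legendre m (int p))"

definition kronecker :: "int \<Rightarrow> nat \<Rightarrow> int" where
  "kronecker m n = (\<Prod>p\<in>prime_factors n. kron_prime m p ^ multiplicity p n)"

definition is_square_int :: "int \<Rightarrow> bool" where
  "is_square_int m \<longleftrightarrow> (\<exists>k::int. m = k ^ 2)"

definition fund_disc :: "int \<Rightarrow> bool" where
  "fund_disc m \<longleftrightarrow> m \<noteq> 1 \<and>
     ((m mod 4 = 1 \<and> squarefree m) \<or>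
      (\<exists>k. m = 4 * k \<and> (k mod 4 = 2 \<or> k mod 4 = 3) \<and> squarefree k))"

definition smooth_fun :: "(real \<Rightarrow> real) \<Rightarrow> bool" where
  "smooth_fun G \<longleftrightarrow> (\<exists>f::nat \<Rightarrow> real \<Rightarrow> real. f 0 = G \<and>
     (\<forall>k x. (f k has_real_derivative f (Suc k) x) (at x)))"

definition admissible_G :: "(real \<Rightarrow> real) \<Rightarrow> bool" where
  "admissible_G G \<longleftrightarrow> smooth_fun G \<and> (\<forall>x. G x \<ge> 0) \<and>
     (\<forall>x. x \<notin> {3/4..2} \<longrightarrow> G x = 0) \<and>
     (\<forall>J::nat. (\<forall>x\<in>{1..3 * 2 powr (real J - 1)}. (\<Sum>j\<le>J. G (x / 2 ^ j)) = 1) \<and>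
               (\<forall>x. x \<notin> {3/4..2 ^ (J+1)} \<longrightarrow> (\<Sum>j\<le>J. G (x / 2 ^ j)) = 0))"

definition dpoly :: "(real \<Rightarrow> real) \<Rightarrow> int \<Rightarrow> real \<Rightarrow> real \<Rightarrow> complex" where
  "dpoly G m N t = (\<Sum>\<^sub>\<infinity>n\<in>{1::nat..}.
      of_int (kronecker m n) / (of_nat n) powr (Complex (1/2) t) * of_real (G (real n / N)))"

definition S_all :: "(real \<Rightarrow> real) \<Rightarrow> real \<Rightarrow> real \<Rightarrow> real \<Rightarrow> real" where
  "S_all G M N t = (\<Sum>m\<in>{m::int. M \<le> real_of_int \<bar>m\<bar> \<and> real_of_int \<bar>m\<bar> < 2 * M \<and> \<not> is_square_int m}.
      norm (dpoly G m N t) ^ 4)"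

definition S_flat :: "(real \<Rightarrow> real) \<Rightarrow> real \<Rightarrow> real \<Rightarrow> real \<Rightarrow> real" where
  "S_flat G M N t = (\<Sum>m\<in>{m::int. M \<le> real_of_int \<bar>m\<bar> \<and> real_of_int \<bar>m\<bar> < 2 * M \<and> fund_disc m}.
      norm (dpoly G m N t) ^ 4)"

end

theory Submission
  imports Defs
begin

lemma legendre_sq:
  fixes m :: int and p q :: nat
  assumes p: "prime p" and q: "prime q" and pq: "p \<noteq> q"
  shows "Legendre (m * int p ^ 2) (int q) = Legendre m (int q)"
proof -
  have cop: "coprime (int p) (int q)"
    using p q pq by (simp add: primes_coprime)
  have cop2: "coprime (int p ^ 2) (int q)" using cop by simp
  have z: "[m * int p ^ 2 = 0] (mod int q) \<longleftrightarrow> [m = 0] (mod int q)"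
  proof -
    have "[m * int p ^ 2 = 0] (mod int q) \<longleftrightarrow> int q dvd m * int p ^ 2"
      by (simp add: cong_0_iff)
    also have "\<dots> \<longleftrightarrow> int q dvd m"
      using cop2 by (metis coprime_commute coprime_dvd_mult_left_iff)
    finally show ?thesis by (simp add: cong_0_iff)
  qed
  obtain u where u: "[int p * u = 1] (mod int q)"
    using cong_solve_coprime_int[OF cop] by blast
  have qr: "QuadRes (int q) (m * int p ^ 2) \<longleftrightarrow> QuadRes (int q) m"
  proof
    assume "QuadRes (int q) (m * int p ^ 2)"
    then obtain y where y: "[y^2 = m * int p ^ 2] (mod int q)" by (auto simp: QuadRes_def)
    have "[(y*u)^2 = m * (int p * u) ^ 2] (mod int q)"
      using cong_mult[OF y cong_refl[of "u^2"]] by (simp add: power_mult_distrib algebra_simps)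
    moreover have "[m * (int p * u) ^ 2 = m * 1 ^ 2] (mod int q)"
      by (intro cong_mult cong_refl cong_pow u)
    ultimately have "[(y*u)^2 = m] (mod int q)" using cong_trans by fastforce
    then show "QuadRes (int q) m" by (auto simp: QuadRes_def)
  next
    assume "QuadRes (int q) m"
    then obtain y where y: "[y^2 = m] (mod int q)" by (auto simp: QuadRes_def)
    have "[(y*int p)^2 = m * int p ^ 2] (mod int q)"
      using cong_mult[OF y cong_refl[of "int p^2"]] by (simp add: power_mult_distrib)
    then show "QuadRes (int q) (m * int p ^ 2)" by (auto simp: QuadRes_def)
  qed
  show ?thesis unfolding Legendre_def using z qr by simp
qed

lemma odd_sq_mod8:
  fixes p :: int assumes "odd p" shows "8 dvd p^2 - 1"
proof -
  obtain k where k: "p = 2*k+1" using assms oddE by blast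
  have "p^2 - 1 = 4 * (k*(k+1))" by (simp add: k power2_eq_square algebra_simps)
  moreover have "even (k*(k+1))" by simp
  ultimately show ?thesis by (metis dvd_mult_cancel_left evenE mult.assoc numeral_Bit0_eq_double dvd_triv_left mult_2_right numeral_times_numeral semiring_norm(2))
qed

lemma kron_prime_sq:
  fixes m :: int and p q :: nat
  assumes p: "prime p" and q: "prime q"
  shows "kron_prime (m * int p ^ 2) q = (if q = p then 0 else kron_prime m q)"
proof (cases "q = p")
  case True
  show ?thesis
  proof (cases "p = 2")
    case True then show ?thesis using \<open>q = p\<close> by (simp add: kron_prime_def)
  next
    case False
    have "[m * int p ^ 2 = 0] (mod int p)" by (simp add: cong_0_iff)
    then show ?thesis using True False by (simp add: kron_prime_def Legendre_def)
  qed
next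
  case False
  show ?thesis
  proof (cases "q = 2")
    case True
    have "odd p" using p False True prime_ge_2_nat[OF p] prime_odd_nat[OF p] by linarith
    hence op: "odd (int p)" by simp
    obtain j where j: "int p ^ 2 - 1 = 8 * j" using odd_sq_mod8[OF op] by blast
    have e: "m * int p ^ 2 = m + 8 * (m * j)" using j by (simp add: algebra_simps)
    have "(m * int p ^ 2) mod 8 = m mod 8" unfolding e by simp
    moreover have "even (m * int p ^ 2) \<longleftrightarrow> even m" using op by simp
    ultimately show ?thesis using True False by (simp add: kron_prime_def)
  next
    case False2: False
    show ?thesis using False False2 legendre_sq[OF p q] by (simp add: kron_prime_def)
  qed
qed


lemma kronecker_sq:
  fixes m :: int and p n :: nat
  assumes p: "prime p" and n: "n > 0"
  shows "kronecker (m * int p ^ 2) n = (if p dvd n then 0 else kronecker m n)"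
proof (cases "p dvd n")
  case True
  have pin: "p \<in> prime_factors n" using True p n by (simp add: in_prime_factors_iff)
  have "multiplicity p n > 0" using True p n by (simp add: prime_multiplicity_gt_zero_iff)
  hence "kron_prime (m * int p ^ 2) p ^ multiplicity p n = 0"
    using kron_prime_sq[OF p p] by simp
  hence "kronecker (m * int p ^ 2) n = 0"
    unfolding kronecker_def using pin by (intro prod_zero) auto
  then show ?thesis using True by simp
next
  case False
  have "kronecker (m * int p ^ 2) n = kronecker m n"
    unfolding kronecker_def
  proof (rule prod.cong[OF refl])
    fix q assume q: "q \<in> prime_factors n"
    hence "q \<noteq> p" "prime q" using False by (auto simp: in_prime_factors_iff)
    thus "kron_prime (m * int p ^ 2) q ^ multiplicity q n = kron_prime m q ^ multiplicity q n"
      using kron_prime_sq[OF p] by simp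
  qed
  then show ?thesis using False by simp
qed

lemma kronecker_mult_prime:
  fixes m :: int and p k :: nat
  assumes p: "prime p" and k: "k > 0"
  shows "kronecker m (p * k) = kron_prime m p * kronecker m k"
proof -
  define h where "h q = kron_prime m q" for q
  define U where "U = prime_factors p \<union> prime_factors k"
  have fin: "finite U" unfolding U_def by simp
  have pk0: "p \<noteq> 0" using p by auto
  have U: "prime_factors (p*k) = U" unfolding U_def using pk0 k by (simp add: prime_factors_product)
  have mul: "multiplicity q (p*k) = multiplicity q p + multiplicity q k" if "q \<in> U" for q
    using that pk0 k unfolding U_def
    by (intro prime_elem_multiplicity_mult_distrib) (auto simp: in_prime_factors_iff)
  have "kronecker m (p*k) = (\<Prod>q\<in>U. h q ^ multiplicity q p * h q ^ multiplicity q k)"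
    unfolding kronecker_def U h_def by (intro prod.cong refl) (simp add: mul power_add)
  also have "\<dots> = (\<Prod>q\<in>U. h q ^ multiplicity q p) * (\<Prod>q\<in>U. h q ^ multiplicity q k)"
    by (rule prod.distrib)
  also have "(\<Prod>q\<in>U. h q ^ multiplicity q p) = (\<Prod>q\<in>prime_factors p. h q ^ multiplicity q p)"
  proof (intro prod.mono_neutral_right fin)
    show "prime_factors p \<subseteq> U" by (auto simp: U_def)
    show "\<forall>i\<in>U - prime_factors p. h i ^ multiplicity i p = 1"
    proof
      fix i assume "i \<in> U - prime_factors p"
      hence "prime i" "i \<notin> prime_factors p" by (auto simp: U_def in_prime_factors_iff)
      hence "multiplicity i p = 0" by (simp add: prime_factors_multiplicity)
      thus "h i ^ multiplicity i p = 1" by simp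
    qed
  qed
  also have "\<dots> = h p" using p by (simp add: prime_prime_factors multiplicity_self)
  also have "(\<Prod>q\<in>U. h q ^ multiplicity q k) = (\<Prod>q\<in>prime_factors k. h q ^ multiplicity q k)"
  proof (intro prod.mono_neutral_right fin)
    show "prime_factors k \<subseteq> U" by (auto simp: U_def)
    show "\<forall>i\<in>U - prime_factors k. h i ^ multiplicity i k = 1"
    proof
      fix i assume "i \<in> U - prime_factors k"
      hence "prime i" "i \<notin> prime_factors k" by (auto simp: U_def in_prime_factors_iff)
      hence "multiplicity i k = 0" by (simp add: prime_factors_multiplicity)
      thus "h i ^ multiplicity i k = 1" by simp
    qed
  qed
  finally show ?thesis unfolding kronecker_def h_def .
qed

lemma kron_prime_abs: "\<bar>kron_prime m q\<bar> \<le> 1"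
  by (simp add: kron_prime_def Legendre_def)

lemma kronecker_abs: "\<bar>kronecker m n\<bar> \<le> 1"
  unfolding kronecker_def abs_prod
  by (intro prod_le_1) (auto simp: power_abs intro: power_le_one kron_prime_abs)

lemma fund_sq_dvd:
  fixes p :: nat
  assumes f: "fund_disc m" and p: "prime p" and d: "int p ^ 2 dvd m"
  shows "p = 2"
proof (rule ccontr)
  assume np: "p \<noteq> 2"
  have nu: "\<not> is_unit (int p)" using prime_gt_1_nat[OF p] by simp
  from f consider "squarefree m" | k where "m = 4 * k" "squarefree k" unfolding fund_disc_def by blast
  then show False
  proof cases
    case 1 then show False using d nu unfolding squarefree_def by blast
  next
    case (2 k)
    have "odd p" using p np prime_ge_2_nat[OF p] prime_odd_nat[OF p] by linarith
    hence "odd (int p)" by simp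
    hence "coprime (int p) 2" by simp
    hence c22: "coprime (int p * int p) (2 * 2)" by (simp only: coprime_mult_left_iff coprime_mult_right_iff)
    have "(2::int) * 2 = 4" by simp
    hence "coprime (int p ^ 2) 4" using c22 by (simp only: power2_eq_square)
    hence "int p ^ 2 dvd k" using d 2(1) by (metis coprime_dvd_mult_right_iff)
    then show False using 2(2) nu unfolding squarefree_def by blast
  qed
qed

lemma fund_nonsq:
  fixes p :: nat
  assumes f: "fund_disc m" and p: "prime p"
  shows "\<not> is_square_int (m * int p ^ 2)"
proof
  assume "is_square_int (m * int p ^ 2)"
  then obtain k where k: "m * int p ^ 2 = k ^ 2" unfolding is_square_int_def by blast
  have pp: "prime (int p)" using p by simp
  have "k ^ 2 = (m * int p) * int p" using k by (simp add: power2_eq_square)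
  hence "int p dvd k ^ 2" by (metis dvd_triv_right)
  hence "int p dvd k" using pp prime_dvd_power by blast
  then obtain j where j: "k = int p * j" by blast
  have p0: "int p ^ 2 \<noteq> 0" using p by (simp add: prime_gt_0_nat)
  have "m * int p ^ 2 = j ^ 2 * int p ^ 2" using k j by (simp add: power_mult_distrib)
  hence mj: "m = j ^ 2" using p0 by simp
  from f have m1: "m \<noteq> 1" unfolding fund_disc_def by blast
  from f consider "squarefree m" | k' where "m = 4 * k'" "k' mod 4 = 2 \<or> k' mod 4 = 3" "squarefree k'"
    unfolding fund_disc_def by blast
  then show False
  proof cases
    case 1
    have sq: "\<forall>x. x^2 dvd m \<longrightarrow> is_unit x" using 1 by (simp add: squarefree_def)
    have "j^2 dvd m" using mj by simp
    hence "is_unit j" using sq by blast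
    hence "\<bar>j\<bar> = 1" by simp
    hence "j ^ 2 = 1" by (metis power2_abs one_power2)
    then show False using mj m1 by simp
  next
    case 2
    have "j ^ 2 = 2 * (2 * k')" using mj 2(1) by simp
    hence "even (j ^ 2)" by (metis dvd_triv_left)
    hence "even j" by simp
    then obtain i where i: "j = 2 * i" by blast
    have "k' = i ^ 2" using mj 2(1) i by (simp add: power_mult_distrib)
    have sq: "\<forall>x. x^2 dvd k' \<longrightarrow> is_unit x" using 2(3) by (simp add: squarefree_def)
    have "i^2 dvd k'" using \<open>k' = i ^ 2\<close> by simp
    hence "is_unit i" using sq by blast
    hence "\<bar>i\<bar> = 1" by simp
    hence "i ^ 2 = 1" by (metis power2_abs one_power2)
    then show False using \<open>k' = i ^ 2\<close> 2(2) by simp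
  qed
qed

lemma fund_inj:
  fixes p p' :: nat
  assumes f: "fund_disc m" "fund_disc m'" and p: "prime p" "prime p'"
    and e: "m * int p ^ 2 = m' * int p' ^ 2"
  shows "p = p' \<and> m = m'"
proof (cases "p = p'")
  case True
  have p0: "int p ^ 2 \<noteq> 0" using p by (simp add: prime_gt_0_nat)
  then show ?thesis using e True by simp
next
  case False
  have cop: "coprime (int p) (int p')" using p False by (simp add: primes_coprime)
  hence cop2: "coprime (int p ^ 2) (int p' ^ 2)" by simp
  have "int p ^ 2 dvd m' * int p' ^ 2" unfolding e[symmetric] by simp
  hence "int p ^ 2 dvd m'" using cop2 by (metis coprime_dvd_mult_left_iff)
  hence "p = 2" using fund_sq_dvd[OF f(2) p(1)] by blast
  have "int p' ^ 2 dvd m * int p ^ 2" unfolding e by simp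
  hence "int p' ^ 2 dvd m" using cop2 by (metis coprime_dvd_mult_left_iff coprime_commute)
  hence "p' = 2" using fund_sq_dvd[OF f(1) p(2)] by blast
  then show ?thesis using False \<open>p = 2\<close> by simp
qed

lemma ineq4:
  fixes a b :: complex
  shows "norm (a + b) ^ 4 \<le> 8 * (norm a ^ 4 + norm b ^ 4)"
proof -
  define x where "x = norm a"
  define y where "y = norm b"
  have x: "x \<ge> 0" and y: "y \<ge> 0" by (auto simp: x_def y_def)
  have "norm (a+b) ^ 4 \<le> (x + y) ^ 4"
    unfolding x_def y_def by (intro power_mono norm_triangle_ineq) auto
  also have "(x + y) ^ 4 = ((x+y)^2)^2" by simp
  also have "((x+y)^2)^2 \<le> (2 * (x^2 + y^2))^2"
  proof (rule power_mono)
    have "(x+y)^2 = 2*(x^2+y^2) - (x-y)^2" by (simp add: power2_eq_square algebra_simps)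
    moreover have "(x-y)^2 \<ge> 0" by simp
    ultimately show "(x+y)^2 \<le> 2 * (x^2 + y^2)" by linarith
  qed simp
  also have "(2 * (x^2 + y^2))^2 = 8 * (x^4 + y^4) - 4 * (x^2-y^2)^2"
    by (simp add: power2_eq_square power4_eq_xxxx algebra_simps)
  also have "\<dots> \<le> 8 * (x^4 + y^4)" by simp
  finally show ?thesis unfolding x_def y_def .
qed

definition tm :: "(real \<Rightarrow> real) \<Rightarrow> int \<Rightarrow> real \<Rightarrow> real \<Rightarrow> nat \<Rightarrow> complex" where
  "tm G m N t n = of_int (kronecker m n) / (of_nat n) powr (Complex (1/2) t) * of_real (G (real n / N))"

lemma dpoly_sum:
  assumes G0: "\<forall>x. x \<notin> {3/4..2} \<longrightarrow> G x = 0" and N: "N > 0" and K: "2 * N \<le> real K"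
  shows "dpoly G m N t = (\<Sum>n\<in>{1..K}. tm G m N t n)"
proof -
  have "dpoly G m N t = infsum (tm G m N t) {1..}" unfolding dpoly_def tm_def by (rule refl)
  also have "\<dots> = infsum (tm G m N t) {1..K}"
  proof (rule infsum_cong_neutral)
    fix x assume "x \<in> {1..} - {1..K}"
    hence "real x > real K" by auto
    hence "real x / N > 2" using K N by (simp add: field_simps)
    hence "G (real x / N) = 0" using G0 by auto
    thus "tm G m N t x = 0" by (simp add: tm_def)
  qed auto
  also have "\<dots> = (\<Sum>n\<in>{1..K}. tm G m N t n)" by simp
  finally show ?thesis .
qed

lemma dpoly_decomp:
  fixes p :: nat
  assumes G0: "\<forall>x. x \<notin> {3/4..2} \<longrightarrow> G x = 0" and N: "N > 0" and p: "prime p"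
  shows "dpoly G m N t = dpoly G (m * int p ^ 2) N t +
           (of_int (kron_prime m p) / (of_nat p) powr (Complex (1/2) t)) * dpoly G m (N / real p) t"
proof -
  define s where "s = Complex (1/2) t"
  define c where "c = of_int (kron_prime m p) / (of_nat p) powr s"
  define K' where "K' = nat \<lceil>2 * N\<rceil>"
  define K where "K = p * K'"
  have p0: "p > 0" using p by (simp add: prime_gt_0_nat)
  hence p1: "p \<ge> 1" by simp
  have K'ge: "2 * N \<le> real K'" unfolding K'_def by linarith
  have "real K' \<le> real K" unfolding K_def using p1 by (simp add: mult_le_cancel_right1)
  hence Kge: "2 * N \<le> real K" using K'ge by linarith
  have "N / real p \<le> N" using p1 N by (simp add: divide_le_eq)
  hence K'ge2: "2 * (N / real p) \<le> real K'" using K'ge by linarith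
  have Np: "N / real p > 0" using N p0 by simp
  have split: "tm G m N t n = tm G (m * int p ^ 2) N t n + (if p dvd n then tm G m N t n else 0)"
    if "n \<in> {1..K}" for n
    using that kronecker_sq[OF p, of n m] by (auto simp: tm_def)
  have "dpoly G m N t = (\<Sum>n\<in>{1..K}. tm G m N t n)" by (rule dpoly_sum[OF G0 N Kge])
  also have "\<dots> = (\<Sum>n\<in>{1..K}. tm G (m * int p ^ 2) N t n) + (\<Sum>n\<in>{1..K}. if p dvd n then tm G m N t n else 0)"
    by (simp add: split sum.distrib)
  also have "(\<Sum>n\<in>{1..K}. tm G (m * int p ^ 2) N t n) = dpoly G (m * int p ^ 2) N t"
    by (rule dpoly_sum[OF G0 N Kge, symmetric])
  also have "(\<Sum>n\<in>{1..K}. if p dvd n then tm G m N t n else 0) = (\<Sum>n\<in>{n\<in>{1..K}. p dvd n}. tm G m N t n)"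
    by (rule sum.inter_filter[symmetric]) simp
  also have "{n\<in>{1..K}. p dvd n} = (\<lambda>k. p * k) ` {1..K'}"
  proof
    show "{n\<in>{1..K}. p dvd n} \<subseteq> (\<lambda>k. p * k) ` {1..K'}"
    proof
      fix n assume "n \<in> {n\<in>{1..K}. p dvd n}"
      then obtain k where k: "n = p * k" "1 \<le> n" "n \<le> p * K'" unfolding K_def by auto
      have "k \<ge> 1" using k by (cases k) auto
      moreover have "k \<le> K'" using k p0 by simp
      ultimately show "n \<in> (\<lambda>k. p * k) ` {1..K'}" using k by auto
    qed
    show "(\<lambda>k. p * k) ` {1..K'} \<subseteq> {n\<in>{1..K}. p dvd n}"
      using p1 by (auto simp: K_def)
  qed
  also have "(\<Sum>n\<in>(\<lambda>k. p * k) ` {1..K'}. tm G m N t n) = (\<Sum>k\<in>{1..K'}. tm G m N t (p * k))"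
    by (rule sum.reindex_cong[where l = "\<lambda>k. p * k"]) (use p0 in \<open>auto simp: inj_on_def\<close>)
  also have "\<dots> = (\<Sum>k\<in>{1..K'}. c * tm G m (N / real p) t k)"
  proof (rule sum.cong[OF refl])
    fix k assume "k \<in> {1..K'}"
    hence k0: "k > 0" by auto
    have pw: "(of_nat (p * k) :: complex) powr s = of_nat p powr s * of_nat k powr s"
      by (simp only: of_nat_mult) (rule powr_times_real_left; auto)
    have g: "real (p * k) / N = real k / (N / real p)" using p0 by (simp add: field_simps)
    show "tm G m N t (p * k) = c * tm G m (N / real p) t k"
      unfolding tm_def c_def s_def[symmetric] kronecker_mult_prime[OF p k0] pw g
      by (simp add: divide_inverse mult_ac)
  qed
  also have "\<dots> = c * dpoly G m (N / real p) t"
    by (simp add: sum_distrib_left[symmetric] dpoly_sum[OF G0 Np K'ge2])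
  finally show ?thesis by (simp add: c_def s_def)
qed

lemma coef_norm:
  fixes p :: nat
  assumes p: "prime p"
  shows "norm (of_int (kron_prime m p) / (of_nat p) powr (Complex (1/2) t)) ^ 4 \<le> 1 / real p ^ 2"
proof -
  have p0: "real p > 0" using p by (simp add: prime_gt_0_nat)
  have n: "norm ((of_nat p :: complex) powr (Complex (1/2) t)) = sqrt (real p)"
    by (subst norm_powr_real_powr) (auto simp: powr_half_sqrt p0 less_imp_le)
  have a: "norm (of_int (kron_prime m p) :: complex) \<le> 1"
    using kron_prime_abs[of m p] by (simp only: norm_of_int)
  have "norm (of_int (kron_prime m p) / (of_nat p) powr (Complex (1/2) t)) \<le> 1 / sqrt (real p)"
    unfolding norm_divide n using a p0 by (simp add: divide_right_mono)
  hence "norm (of_int (kron_prime m p) / (of_nat p) powr (Complex (1/2) t)) ^ 4 \<le> (1 / sqrt (real p)) ^ 4"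
    by (intro power_mono) auto
  also have "(1 / sqrt (real p)) ^ 4 = 1 / real p ^ 2"
    using p0 by (simp add: power_divide power4_eq_xxxx power2_eq_square)
  finally show ?thesis .
qed

theorem lemma3p1:
  fixes G :: "real \<Rightarrow> real"
  assumes "admissible_G G"
  shows "\<exists>C>0. \<forall>L0::real.
    (\<forall>L\<ge>L0. real (card {p::nat. prime p \<and> sqrt L \<le> real p \<and> real p \<le> sqrt (2 * L)}) > sqrt L / (2 * ln L)) \<longrightarrow>
    (\<forall>L\<ge>L0. \<forall>M N t. M > 0 \<longrightarrow> N > 0 \<longrightarrow>
       S_flat G M N t \<le> C * (ln L / sqrt L) *
         (S_all G (M * L) N t + S_all G (2 * M * L) N t +
          (\<Sum>p\<in>{p::nat. prime p \<and> sqrt L \<le> real p \<and> real p \<le> sqrt (2 * L)}.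
              S_flat G M (N / real p) t / real p ^ 2)))"
proof -
  from assms have G0: "\<forall>x. x \<notin> {3/4..2} \<longrightarrow> G x = 0" unfolding admissible_G_def by blast
  show ?thesis
  proof (rule exI[of _ 16], intro conjI)
    show "(16::real) > 0" by simp
    show "\<forall>L0::real.
    (\<forall>L\<ge>L0. real (card {p::nat. prime p \<and> sqrt L \<le> real p \<and> real p \<le> sqrt (2 * L)}) > sqrt L / (2 * ln L)) \<longrightarrow>
    (\<forall>L\<ge>L0. \<forall>M N t. M > 0 \<longrightarrow> N > 0 \<longrightarrow>
       S_flat G M N t \<le> 16 * (ln L / sqrt L) *
         (S_all G (M * L) N t + S_all G (2 * M * L) N t +
          (\<Sum>p\<in>{p::nat. prime p \<and> sqrt L \<le> real p \<and> real p \<le> sqrt (2 * L)}.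
              S_flat G M (N / real p) t / real p ^ 2)))"
    proof (intro allI impI)
      fix L0 L M N t :: real
      assume H: "\<forall>L\<ge>L0. real (card {p::nat. prime p \<and> sqrt L \<le> real p \<and> real p \<le> sqrt (2 * L)}) > sqrt L / (2 * ln L)"
        and LL0: "L \<ge> L0" and M: "M > 0" and N: "N > 0"
      have "L0 > 1"
      proof (rule ccontr)
        assume "\<not> L0 > 1"
        hence "1 \<ge> L0" by simp
        with H have c1: "real (card {p::nat. prime p \<and> sqrt 1 \<le> real p \<and> real p \<le> sqrt (2*1)}) > sqrt 1 / (2 * ln 1)"
          by blast
        have "sqrt 2 < sqrt 4" by (rule real_sqrt_less_mono) simp
        hence s2: "sqrt 2 < 2" by (metis real_sqrt_four)
        have E: "{p::nat. prime p \<and> sqrt 1 \<le> real p \<and> real p \<le> sqrt (2*1)} = {}"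
        proof (intro equalityI subsetI)
          fix p assume "p \<in> {p::nat. prime p \<and> sqrt 1 \<le> real p \<and> real p \<le> sqrt (2*1)}"
          hence "prime p" "real p \<le> sqrt 2" by auto
          moreover have "real p \<ge> 2" using prime_ge_2_nat[OF \<open>prime p\<close>] by simp
          ultimately show "p \<in> {}" using s2 by linarith
        qed simp
        have "real (card ({}::nat set)) > sqrt 1 / (2 * ln 1)" using c1 by (simp only: E)
        then show False by simp
      qed
      hence L1: "L > 1" using LL0 by linarith
      define P where "P = {p::nat. prime p \<and> sqrt L \<le> real p \<and> real p \<le> sqrt (2 * L)}"
      define F where "F = {m::int. M \<le> real_of_int \<bar>m\<bar> \<and> real_of_int \<bar>m\<bar> < 2 * M \<and> fund_disc m}"
      define D where "D m NN = norm (dpoly G m NN t) ^ 4" for m NN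
      have cardP: "real (card P) > sqrt L / (2 * ln L)" using H LL0 unfolding P_def by blast
      have lnL: "ln L > 0" using L1 by simp
      have sqL: "sqrt L > 0" using L1 by simp
      have cP0: "real (card P) > 0" using cardP lnL sqL by (smt (verit) divide_pos_pos)
      have finP: "finite P"
      proof (rule finite_subset)
        show "P \<subseteq> {..nat \<lceil>sqrt (2 * L)\<rceil>}" unfolding P_def by (auto simp: le_nat_iff; linarith)
      qed simp
      have finF: "finite F"
      proof (rule finite_subset)
        show "F \<subseteq> {-\<lceil>2*M\<rceil>..\<lceil>2*M\<rceil>}" unfolding F_def by (auto; linarith)
      qed simp
      have pL: "L \<le> real p ^ 2 \<and> real p ^ 2 \<le> 2 * L" if "p \<in> P" for p
      proof -
        from that have a: "sqrt L \<le> real p" and b: "real p \<le> sqrt (2 * L)" by (auto simp: P_def)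
        have "(sqrt L)^2 \<le> (real p)^2" using a sqL by (intro power_mono) auto
        moreover have "(real p)^2 \<le> (sqrt (2*L))^2" using b by (intro power_mono) auto
        ultimately show ?thesis using L1 by simp
      qed
      have key: "D m N \<le> 8 * D (m * int p ^ 2) N + 8 * (D m (N / real p) / real p ^ 2)"
        if "p \<in> P" for m p
      proof -
        have pp: "prime p" using that by (simp add: P_def)
        define c where "c = of_int (kron_prime m p) / (of_nat p) powr (Complex (1/2) t)"
        have "D m N = norm (dpoly G (m * int p ^ 2) N t + c * dpoly G m (N / real p) t) ^ 4"
          unfolding D_def c_def using dpoly_decomp[OF G0 N pp] by metis
        also have "\<dots> \<le> 8 * (D (m * int p ^ 2) N + norm (c * dpoly G m (N / real p) t) ^ 4)"
          unfolding D_def by (rule ineq4)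
        also have "norm (c * dpoly G m (N / real p) t) ^ 4 = norm c ^ 4 * D m (N / real p)"
          by (simp add: D_def norm_mult power_mult_distrib)
        also have "\<dots> \<le> (1 / real p ^ 2) * D m (N / real p)"
          unfolding c_def by (rule mult_right_mono[OF coef_norm[OF pp]]) (simp add: D_def)
        finally show ?thesis by (simp add: algebra_simps)
      qed
      have Dnn: "D m NN \<ge> 0" for m NN by (simp add: D_def)
      have Sflat: "S_flat G M NN t = (\<Sum>m\<in>F. D m NN)" for NN
        by (simp add: S_flat_def F_def D_def)
      define A1 where "A1 = {m::int. M * L \<le> real_of_int \<bar>m\<bar> \<and> real_of_int \<bar>m\<bar> < 2 * (M * L) \<and> \<not> is_square_int m}"
      define A2 where "A2 = {m::int. 2 * M * L \<le> real_of_int \<bar>m\<bar> \<and> real_of_int \<bar>m\<bar> < 2 * (2 * M * L) \<and> \<not> is_square_int m}"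
      have S1: "S_all G (M * L) N t = (\<Sum>m\<in>A1. D m N)" by (simp add: S_all_def A1_def D_def)
      have S2: "S_all G (2 * M * L) N t = (\<Sum>m\<in>A2. D m N)" by (simp add: S_all_def A2_def D_def)
      have finA1: "finite A1"
      proof (rule finite_subset)
        show "A1 \<subseteq> {-\<lceil>2*(M*L)\<rceil>..\<lceil>2*(M*L)\<rceil>}" unfolding A1_def by (auto; linarith)
      qed simp
      have finA2: "finite A2"
      proof (rule finite_subset)
        show "A2 \<subseteq> {-\<lceil>2*(2*M*L)\<rceil>..\<lceil>2*(2*M*L)\<rceil>}" unfolding A2_def by (auto; linarith)
      qed simp
      have disj: "A1 \<inter> A2 = {}" unfolding A1_def A2_def by auto
      define g where "g = (\<lambda>(m::int, p::nat). m * int p ^ 2)"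
      have injg: "inj_on g (F \<times> P)"
        unfolding inj_on_def g_def F_def P_def using fund_inj by auto
      have imgg: "g ` (F \<times> P) \<subseteq> A1 \<union> A2"
      proof
        fix n assume "n \<in> g ` (F \<times> P)"
        then obtain m p where mp: "m \<in> F" "p \<in> P" "n = m * int p ^ 2" unfolding g_def by auto
        have pp: "prime p" using mp(2) by (simp add: P_def)
        have nsq: "\<not> is_square_int n" using mp fund_nonsq[OF _ pp] by (simp add: F_def)
        have ab: "real_of_int \<bar>n\<bar> = real_of_int \<bar>m\<bar> * real p ^ 2" using mp(3) by (simp add: abs_mult)
        have m1: "M \<le> real_of_int \<bar>m\<bar>" "real_of_int \<bar>m\<bar> < 2 * M" using mp(1) by (auto simp: F_def)
        have p2: "L \<le> real p ^ 2" "real p ^ 2 \<le> 2 * L" using pL[OF mp(2)] by auto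
        have lo: "M * L \<le> real_of_int \<bar>n\<bar>" unfolding ab using m1 p2 M L1 by (intro mult_mono) auto
        have "real_of_int \<bar>n\<bar> < 2 * M * (2 * L)" unfolding ab
          using m1 p2 M L1 prime_gt_0_nat[OF pp] by (intro mult_less_le_imp_less) auto
        hence hi: "real_of_int \<bar>n\<bar> < 2 * (2 * M * L)" by (simp add: algebra_simps)
        show "n \<in> A1 \<union> A2"
        proof (cases "real_of_int \<bar>n\<bar> < 2 * (M * L)")
          case True then show ?thesis using lo nsq by (simp add: A1_def)
        next
          case False then show ?thesis using hi nsq by (simp add: A2_def algebra_simps)
        qed
      qed
      have first: "(\<Sum>m\<in>F. \<Sum>p\<in>P. D (m * int p ^ 2) N) \<le> S_all G (M * L) N t + S_all G (2 * M * L) N t"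
      proof -
        have "(\<Sum>m\<in>F. \<Sum>p\<in>P. D (m * int p ^ 2) N) = (\<Sum>x\<in>F \<times> P. D (g x) N)"
          by (simp add: sum.cartesian_product g_def case_prod_beta)
        also have "\<dots> = (\<Sum>n\<in>g ` (F \<times> P). D n N)"
          by (rule sum.reindex[OF injg, symmetric, unfolded comp_def])
        also have "\<dots> \<le> (\<Sum>n\<in>A1 \<union> A2. D n N)"
          by (rule sum_mono2) (use finA1 finA2 imgg Dnn in auto)
        also have "\<dots> = S_all G (M * L) N t + S_all G (2 * M * L) N t"
          unfolding S1 S2 by (rule sum.union_disjoint[OF finA1 finA2 disj])
        finally show ?thesis .
      qed
      have second: "(\<Sum>m\<in>F. \<Sum>p\<in>P. D m (N / real p) / real p ^ 2) = (\<Sum>p\<in>P. S_flat G M (N / real p) t / real p ^ 2)"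
        by (subst sum.swap) (simp add: Sflat sum_divide_distrib)
      define X where "X = S_all G (M * L) N t + S_all G (2 * M * L) N t + (\<Sum>p\<in>P. S_flat G M (N / real p) t / real p ^ 2)"
      have "real (card P) * S_flat G M N t = (\<Sum>m\<in>F. \<Sum>p\<in>P. D m N)"
        by (simp add: Sflat sum_distrib_left)
      also have "\<dots> \<le> (\<Sum>m\<in>F. \<Sum>p\<in>P. 8 * D (m * int p ^ 2) N + 8 * (D m (N / real p) / real p ^ 2))"
        by (intro sum_mono key) auto
      also have "\<dots> = 8 * ((\<Sum>m\<in>F. \<Sum>p\<in>P. D (m * int p ^ 2) N) + (\<Sum>m\<in>F. \<Sum>p\<in>P. D m (N / real p) / real p ^ 2))"
        by (simp add: sum.distrib sum_distrib_left)
      also have "\<dots> \<le> 8 * X"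
        unfolding second X_def using first by simp
      finally have main: "real (card P) * S_flat G M N t \<le> 8 * X" .
      have Sf0: "S_flat G M N t \<ge> 0" unfolding Sflat by (intro sum_nonneg Dnn)
      have X0: "X \<ge> 0" using main Sf0 cP0 by (smt (verit) mult_nonneg_nonneg)
      have "S_flat G M N t \<le> 8 * X / real (card P)" using main cP0 by (simp add: field_simps)
      also have "\<dots> \<le> 8 * X * (2 * ln L / sqrt L)"
      proof -
        have "1 / real (card P) \<le> 2 * ln L / sqrt L"
          using cardP cP0 lnL sqL by (simp add: field_simps)
        hence "8 * X * (1 / real (card P)) \<le> 8 * X * (2 * ln L / sqrt L)"
          using X0 by (intro mult_left_mono) auto
        thus ?thesis by simp
      qed
      also have "\<dots> = 16 * (ln L / sqrt L) * X" by simp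
      finally show "S_flat G M N t \<le> 16 * (ln L / sqrt L) *
         (S_all G (M * L) N t + S_all G (2 * M * L) N t +
          (\<Sum>p\<in>{p::nat. prime p \<and> sqrt L \<le> real p \<and> real p \<le> sqrt (2 * L)}.
              S_flat G M (N / real p) t / real p ^ 2))" unfolding X_def P_def .
    qed
  qed
qed

end
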